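(* Let $n,m\ge1$, $c_1,\dots,c_n>0$, $T>0$, $\epsilon>0$, $r_1,\dots,r_m>0$ and $\kappa_{ij}\ge0$. For $\mu\in\mathbb{R}^n$ let $\varphi^i_\epsilon(\mu)=-\epsilon\log\big(\sum_{j=1}^n e^{-(\kappa_{ij}+\mu_j)/\epsilon}\big)$, and define on $[0,T)^n$ $$D(\mu)=\sum_{i=1}^m r_i\varphi^i_\epsilon(\mu)+\sum_{j=1}^n c_j\log\Big(1-\frac{\mu_j}{T}\Big).$$ Then $D$ is strictly concave on $[0,T)^n$ and has a finite maximum $D^*$ over $[0,T)^n$, achieved at a unique $\mu^*\in[0,T)^n$.
   Context: $D$ is the Lagrange dual function of the station-assignment optimization problem (minimizing $\sum\kappa_{ij}x_{ij}+\sum_j\beta_j(q_j)+\epsilon\sum x_{ij}\log(x_{ij}/r_i)$ subject to $x_{ij}\ge0$, $\sum_jx_{ij}=r_i$, $\sum_ix_{ij}=q_j/T$), dualized with respect to the last constraint. *)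

theory Defs
  imports "HOL-Analysis.Analysis"
begin

definition strictly_concave_on :: "'a::real_vector set \<Rightarrow> ('a \<Rightarrow> real) \<Rightarrow> bool"
  where "strictly_concave_on S f \<longleftrightarrow> convex S \<and>
    (\<forall>x\<in>S. \<forall>y\<in>S. x \<noteq> y \<longrightarrow> (\<forall>t. 0 < t \<and> t < 1 \<longrightarrow>
       f ((1 - t) *\<^sub>R x + t *\<^sub>R y) > (1 - t) * f x + t * f y))"

definition phi_eps :: "real \<Rightarrow> ('m \<Rightarrow> 'n::finite \<Rightarrow> real) \<Rightarrow> 'm \<Rightarrow> real^'n \<Rightarrow> real"
  where "phi_eps \<epsilon> \<kappa> i \<mu> = - \<epsilon> * ln (\<Sum>j\<in>UNIV. exp (- (\<kappa> i j + \<mu> $ j) / \<epsilon>))"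

definition dual_D :: "real \<Rightarrow> real \<Rightarrow> ('m::finite \<Rightarrow> real) \<Rightarrow> ('n::finite \<Rightarrow> real)
    \<Rightarrow> ('m \<Rightarrow> 'n \<Rightarrow> real) \<Rightarrow> real^'n \<Rightarrow> real"
  where "dual_D T \<epsilon> r c \<kappa> \<mu> =
    (\<Sum>i\<in>UNIV. r i * phi_eps \<epsilon> \<kappa> i \<mu>) + (\<Sum>j\<in>UNIV. c j * ln (1 - \<mu> $ j / T))"

definition box_T :: "real \<Rightarrow> (real^'n) set"
  where "box_T T = {\<mu>. \<forall>j. 0 \<le> \<mu> $ j \<and> \<mu> $ j < T}"

end

theory Submission imports Defs begin


lemma ln_strict:
  fixes a b t :: real
  assumes "0 < a" "0 < b" "a \<noteq> b" "0 < t" "t < 1"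
  shows "(1 - t) * ln a + t * ln b < ln ((1 - t) * a + t * b)"
proof -
  define m where "m = (1 - t) * a + t * b"
  have m: "m > 0" using assms unfolding m_def by (smt (verit) mult_pos_pos)
  have ex: "1 + u < exp u" if "u \<noteq> 0" for u :: real
  proof (cases "1 + u / 2 \<ge> 0")
    case True
    have "exp u = exp (u/2) * exp (u/2)" by (simp flip: exp_add)
    also have "\<dots> \<ge> (1 + u/2) * (1 + u/2)"
      using True exp_ge_add_one_self[of "u/2"] by (intro mult_mono) auto
    finally have "exp u \<ge> 1 + u + u^2/4" by (simp add: algebra_simps power2_eq_square)
    moreover have "u^2 > 0" using that by simp
    ultimately show ?thesis by linarith
  next
    case False
    then have "1 + u < 0" by linarith
    then show ?thesis using exp_gt_zero[of u] by linarith
  qed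
  have lt: "ln x < x - 1" if "x > 0" "x \<noteq> 1" for x :: real
  proof -
    have "ln x \<noteq> 0" using that by simp
    from ex[OF this] show ?thesis using that by simp
  qed
  have "a - m = t * (a - b)" unfolding m_def by (simp add: algebra_simps)
  hence am: "a \<noteq> m" using assms by auto
  have "b - m = (1 - t) * (b - a)" unfolding m_def by (simp add: algebra_simps)
  hence bm: "b \<noteq> m" using assms by auto
  have "ln (a / m) < a / m - 1" using lt[of "a/m"] am m assms by auto
  hence 1: "ln a - ln m < a / m - 1" using m assms by (simp add: ln_div)
  have "ln (b / m) < b / m - 1" using lt[of "b/m"] bm m assms by auto
  hence 2: "ln b - ln m < b / m - 1" using m assms by (simp add: ln_div)
  have "(1 - t) * (ln a - ln m) + t * (ln b - ln m) < (1 - t) * (a / m - 1) + t * (b / m - 1)"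
    using 1 2 assms by (intro add_strict_mono mult_strict_left_mono) auto
  also have "\<dots> = 0" using m unfolding m_def by (simp add: field_simps)
  finally show ?thesis unfolding m_def[symmetric] by (simp add: algebra_simps)
qed


lemma lse_convex:
  fixes u v :: "'n::finite \<Rightarrow> real" and t :: real
  assumes "0 \<le> t" "t \<le> 1"
  shows "ln (\<Sum>j\<in>UNIV. exp ((1 - t) * u j + t * v j))
     \<le> (1 - t) * ln (\<Sum>j\<in>UNIV. exp (u j)) + t * ln (\<Sum>j\<in>UNIV. exp (v j))"
proof -
  define SU where "SU = (\<Sum>j\<in>UNIV. exp (u j))"
  define SV where "SV = (\<Sum>j\<in>UNIV. exp (v j))"
  have SU: "SU > 0" unfolding SU_def by (intro sum_pos) auto
  have SV: "SV > 0" unfolding SV_def by (intro sum_pos) auto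
  define U where "U = ln SU"
  define V where "V = ln SV"
  have pt: "exp ((1 - t) * u j + t * v j) * exp (- ((1 - t) * U + t * V))
      \<le> (1 - t) * (exp (u j) / SU) + t * (exp (v j) / SV)" for j
  proof -
    have "exp ((1 - t) * u j + t * v j) * exp (- ((1 - t) * U + t * V))
        = exp ((1 - t) * (u j - U) + t * (v j - V))"
      by (simp flip: exp_add add: algebra_simps)
    also have "\<dots> \<le> (1 - t) * exp (u j - U) + t * exp (v j - V)"
      using convex_onD[OF exp_convex, of t "u j - U" "v j - V"] assms by simp
    also have "\<dots> = (1 - t) * (exp (u j) / SU) + t * (exp (v j) / SV)"
      using SU SV unfolding U_def V_def by (simp add: exp_diff)
    finally show ?thesis .
  qed
  have "(\<Sum>j\<in>UNIV. exp ((1 - t) * u j + t * v j)) * exp (- ((1 - t) * U + t * V))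
      \<le> (\<Sum>j\<in>UNIV. (1 - t) * (exp (u j) / SU) + t * (exp (v j) / SV))"
    unfolding sum_distrib_right by (intro sum_mono pt)
  also have "\<dots> = (1 - t) * ((\<Sum>j\<in>UNIV. exp (u j)) / SU) + t * ((\<Sum>j\<in>UNIV. exp (v j)) / SV)"
    by (simp add: sum.distrib flip: sum_distrib_left sum_divide_distrib)
  also have "\<dots> = (1 - t) * (SU / SU) + t * (SV / SV)"
    unfolding SU_def SV_def by simp
  also have "\<dots> = 1" using SU SV by simp
  finally have le: "(\<Sum>j\<in>UNIV. exp ((1 - t) * u j + t * v j)) * exp (- ((1 - t) * U + t * V)) \<le> 1" .
  have pos: "(\<Sum>j\<in>UNIV. exp ((1 - t) * u j + t * v j)) > 0" by (intro sum_pos) auto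
  have "ln ((\<Sum>j\<in>UNIV. exp ((1 - t) * u j + t * v j)) * exp (- ((1 - t) * U + t * V))) \<le> 0"
    using le pos by (simp del: exp_minus)
  hence "ln (\<Sum>j\<in>UNIV. exp ((1 - t) * u j + t * v j)) - ((1 - t) * U + t * V) \<le> 0"
    using pos by (simp add: ln_mult del: exp_minus)
  thus ?thesis unfolding U_def V_def SU_def SV_def by simp
qed

lemma phi_concave:
  fixes x y :: "real^'n::finite" and t \<epsilon> :: real
  assumes "0 \<le> t" "t \<le> 1" "\<epsilon> > 0"
  shows "phi_eps \<epsilon> \<kappa> i ((1 - t) *\<^sub>R x + t *\<^sub>R y)
     \<ge> (1 - t) * phi_eps \<epsilon> \<kappa> i x + t * phi_eps \<epsilon> \<kappa> i y"
proof -
  define u where "u j = - (\<kappa> i j + x $ j) / \<epsilon>" for j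
  define v where "v j = - (\<kappa> i j + y $ j) / \<epsilon>" for j
  have eq: "- (\<kappa> i j + ((1 - t) *\<^sub>R x + t *\<^sub>R y) $ j) / \<epsilon> = (1 - t) * u j + t * v j" for j
    unfolding u_def v_def using assms by (simp add: field_simps)
  have "\<epsilon> * ln (\<Sum>j\<in>UNIV. exp ((1 - t) * u j + t * v j))
     \<le> \<epsilon> * ((1 - t) * ln (\<Sum>j\<in>UNIV. exp (u j)) + t * ln (\<Sum>j\<in>UNIV. exp (v j)))"
    using lse_convex[OF assms(1,2), of u v] assms(3) by (intro mult_left_mono) auto
  thus ?thesis unfolding phi_eps_def eq unfolding u_def v_def by (simp add: algebra_simps)
qed


lemma sum_comb: "(\<Sum>i\<in>S. w i * ((1 - t) * A i + t * B i)) = (1 - t) * (\<Sum>i\<in>S. w i * A i) + t * (\<Sum>i\<in>S. w i * B i)"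
  for w A B :: "'a \<Rightarrow> real"
proof -
  have "(\<Sum>i\<in>S. w i * ((1 - t) * A i + t * B i)) = (\<Sum>i\<in>S. (1 - t) * (w i * A i) + t * (w i * B i))"
    by (rule sum.cong) (simp_all add: algebra_simps)
  also have "\<dots> = (1 - t) * (\<Sum>i\<in>S. w i * A i) + t * (\<Sum>i\<in>S. w i * B i)"
    by (simp add: sum.distrib sum_distrib_left)
  finally show ?thesis .
qed

lemma box_T_convex: "convex (box_T T)"
proof (rule convexI)
  fix x y :: "real^'n" and u v :: real
  assume "x \<in> box_T T" "y \<in> box_T T" and uv: "0 \<le> u" "0 \<le> v" "u + v = 1"
  then have x: "\<forall>j. 0 \<le> x $ j \<and> x $ j < T" and y: "\<forall>j. 0 \<le> y $ j \<and> y $ j < T"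
    by (auto simp: box_T_def)
  show "u *\<^sub>R x + v *\<^sub>R y \<in> box_T T" unfolding box_T_def
  proof (clarsimp)
  fix j
  have "u * x $ j + v * y $ j \<le> u * max (x $ j) (y $ j) + v * max (x $ j) (y $ j)"
    using uv by (intro add_mono mult_left_mono) auto
  also have "\<dots> = max (x $ j) (y $ j)" using uv by (simp flip: distrib_right)
  finally have "u * x $ j + v * y $ j < T" using x y by (smt (verit))
  moreover have "0 \<le> u * x $ j + v * y $ j" using x y uv by simp
  ultimately show "0 \<le> u * x $ j + v * y $ j \<and> u * x $ j + v * y $ j < T" by simp
  qed
qed

lemma D_strict:
  fixes c :: "'n::finite \<Rightarrow> real" and r :: "'m::finite \<Rightarrow> real"
    and \<kappa> :: "'m \<Rightarrow> 'n \<Rightarrow> real" and T \<epsilon> :: real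
  assumes "\<And>j. c j > 0" and "T > 0" and "\<epsilon> > 0"
    and "\<And>i. r i > 0"
  shows "strictly_concave_on (box_T T) (dual_D T \<epsilon> r c \<kappa>)"
  unfolding strictly_concave_on_def
proof (intro conjI box_T_convex ballI impI allI)
  fix x y :: "real^'n" and t :: real
  assume x: "x \<in> box_T T" and y: "y \<in> box_T T" and xy: "x \<noteq> y" and t: "0 < t \<and> t < 1"
  define z where "z = (1 - t) *\<^sub>R x + t *\<^sub>R y"
  have 1: "(\<Sum>i\<in>UNIV. r i * ((1 - t) * phi_eps \<epsilon> \<kappa> i x + t * phi_eps \<epsilon> \<kappa> i y))
      \<le> (\<Sum>i\<in>UNIV. r i * phi_eps \<epsilon> \<kappa> i z)"
    unfolding z_def using assms t
    by (intro sum_mono mult_left_mono phi_concave) (auto intro: less_imp_le)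
  have le: "c j * ((1 - t) * ln (1 - x $ j / T) + t * ln (1 - y $ j / T)) \<le> c j * ln (1 - z $ j / T)
     \<and> (x $ j \<noteq> y $ j \<longrightarrow> c j * ((1 - t) * ln (1 - x $ j / T) + t * ln (1 - y $ j / T)) < c j * ln (1 - z $ j / T))" for j
  proof (cases "x $ j = y $ j")
    case True
    then show ?thesis unfolding z_def by (simp add: algebra_simps)
  next
    case False
    have a: "1 - x $ j / T > 0" and b: "1 - y $ j / T > 0"
      using x y assms(2) by (auto simp: box_T_def)
    have ne: "1 - x $ j / T \<noteq> 1 - y $ j / T" using False assms(2) by simp
    have "1 - z $ j / T = (1 - t) * (1 - x $ j / T) + t * (1 - y $ j / T)"
      unfolding z_def using assms(2) by (simp add: field_simps)
    then have "(1 - t) * ln (1 - x $ j / T) + t * ln (1 - y $ j / T) < ln (1 - z $ j / T)"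
      using ln_strict[OF a b ne] t by simp
    then show ?thesis using assms(1)[of j] False by simp
  qed
  obtain j0 where "x $ j0 \<noteq> y $ j0" using xy by (auto simp: vec_eq_iff)
  then have 2: "(\<Sum>j\<in>UNIV. c j * ((1 - t) * ln (1 - x $ j / T) + t * ln (1 - y $ j / T)))
      < (\<Sum>j\<in>UNIV. c j * ln (1 - z $ j / T))"
    using le by (intro sum_strict_mono_ex1) auto
  have "(1 - t) * dual_D T \<epsilon> r c \<kappa> x + t * dual_D T \<epsilon> r c \<kappa> y
     = (\<Sum>i\<in>UNIV. r i * ((1 - t) * phi_eps \<epsilon> \<kappa> i x + t * phi_eps \<epsilon> \<kappa> i y))
     + (\<Sum>j\<in>UNIV. c j * ((1 - t) * ln (1 - x $ j / T) + t * ln (1 - y $ j / T)))"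
    unfolding dual_D_def sum_comb by (simp add: algebra_simps)
  also have "\<dots> < dual_D T \<epsilon> r c \<kappa> z"
    using 1 2 unfolding dual_D_def by linarith
  finally show "(1 - t) * dual_D T \<epsilon> r c \<kappa> x + t * dual_D T \<epsilon> r c \<kappa> y
      < dual_D T \<epsilon> r c \<kappa> ((1 - t) *\<^sub>R x + t *\<^sub>R y)" unfolding z_def .
qed


theorem proposition2:
  fixes c :: "'n::finite \<Rightarrow> real" and r :: "'m::finite \<Rightarrow> real"
    and \<kappa> :: "'m \<Rightarrow> 'n \<Rightarrow> real" and T \<epsilon> :: real
  assumes "\<And>j. c j > 0" and "T > 0" and "\<epsilon> > 0"
    and "\<And>i. r i > 0" and "\<And>i j. \<kappa> i j \<ge> 0"
  shows "strictly_concave_on (box_T T) (dual_D T \<epsilon> r c \<kappa>)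
    \<and> (\<exists>!\<mu>s. \<mu>s \<in> box_T T \<and> (\<forall>\<mu>\<in>box_T T. dual_D T \<epsilon> r c \<kappa> \<mu> \<le> dual_D T \<epsilon> r c \<kappa> \<mu>s))"
proof -
  define D where "D = dual_D T \<epsilon> r c \<kappa>"
  have sc: "strictly_concave_on (box_T T) D"
    unfolding D_def using D_strict[OF assms(1-4)] .
  define j0 :: 'n where "j0 = undefined"
  define M where "M = (\<Sum>i\<in>UNIV. r i * (\<kappa> i j0 + T))"
  have phib: "phi_eps \<epsilon> \<kappa> i \<mu> \<le> \<kappa> i j0 + T" if "\<mu> \<in> box_T T" for i \<mu>
  proof -
    have "exp (- (\<kappa> i j0 + \<mu> $ j0) / \<epsilon>) \<le> (\<Sum>j\<in>UNIV. exp (- (\<kappa> i j + \<mu> $ j) / \<epsilon>))"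
      by (rule member_le_sum) auto
    hence "- (\<kappa> i j0 + \<mu> $ j0) / \<epsilon> \<le> ln (\<Sum>j\<in>UNIV. exp (- (\<kappa> i j + \<mu> $ j) / \<epsilon>))"
      by (subst ln_ge_iff) (auto intro: sum_pos)
    hence "- \<epsilon> * ln (\<Sum>j\<in>UNIV. exp (- (\<kappa> i j + \<mu> $ j) / \<epsilon>)) \<le> \<kappa> i j0 + \<mu> $ j0"
      using assms(3) by (simp add: field_simps)
    moreover have "\<mu> $ j0 < T" using that by (auto simp: box_T_def)
    ultimately show ?thesis unfolding phi_eps_def by simp
  qed
  have Sb: "(\<Sum>i\<in>UNIV. r i * phi_eps \<epsilon> \<kappa> i \<mu>) \<le> M" if "\<mu> \<in> box_T T" for \<mu>
    unfolding M_def using assms(4) phib[OF that] by (intro sum_mono mult_left_mono) (auto intro: less_imp_le)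
  have lnle: "c j * ln (1 - \<mu> $ j / T) \<le> 0" if "\<mu> \<in> box_T T" for \<mu> j
  proof -
    have "0 < 1 - \<mu> $ j / T" "1 - \<mu> $ j / T \<le> 1" using that assms(2) by (auto simp: box_T_def)
    then have "ln (1 - \<mu> $ j / T) \<le> 0" by simp
    then show ?thesis using assms(1)[of j] by (simp add: mult_nonneg_nonpos)
  qed
  have z: "0 \<in> box_T T" using assms(2) by (simp add: box_T_def)
  define D0 where "D0 = D 0"
  have D0M: "D0 \<le> M" unfolding D0_def D_def dual_D_def using Sb[OF z] by simp
  define L where "L = D0 - M - 1"
  have L: "L < 0" unfolding L_def using D0M by simp
  define e where "e = Min (range (\<lambda>j. exp (L / c j)))"
  have e_le: "e \<le> exp (L / c j)" for j unfolding e_def by (rule Min_le) auto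
  have e_pos: "e > 0" unfolding e_def by (subst Min_gr_iff) auto
  have "L / c j0 < 0" using L assms(1)[of j0] by (simp add: divide_neg_pos)
  hence "exp (L / c j0) < 1" by simp
  hence e1: "e < 1" using e_le[of j0] by linarith
  define \<delta> where "\<delta> = T * (1 - e)"
  have \<delta>: "0 < \<delta>" "\<delta> < T" unfolding \<delta>_def using e_pos e1 assms(2) by auto
  define K where "K = cbox (0::real^'n) (\<chi> j. \<delta>)"
  have Kbox: "K \<subseteq> box_T T" unfolding K_def box_T_def using \<delta> by (auto simp: mem_box_cart) (meson le_less_trans)
  have zK: "0 \<in> K" unfolding K_def using \<delta> by (simp add: mem_box_cart)
  have cont: "continuous_on K D"
  proof -
    have pos: "1 - \<mu> $ j / T \<noteq> 0" if "\<mu> \<in> K" for \<mu> j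
      using Kbox that assms(2) by (auto simp: box_T_def)
    have pos2: "(\<Sum>j\<in>UNIV. exp (- (\<kappa> i j + \<mu> $ j) / \<epsilon>)) \<noteq> 0" for \<mu> i
      using sum_pos[of UNIV "\<lambda>j. exp (- (\<kappa> i j + \<mu> $ j) / \<epsilon>)"] by auto
    show ?thesis unfolding D_def dual_D_def phi_eps_def
      by (intro continuous_intros continuous_on_ln) (use pos pos2 assms(2,3) in auto)
  qed
  obtain \<mu>s where \<mu>sK: "\<mu>s \<in> K" and \<mu>smax: "\<And>y. y \<in> K \<Longrightarrow> D y \<le> D \<mu>s"
  proof -
    have "compact K" unfolding K_def by (rule compact_cbox)
    moreover have "K \<noteq> {}" using zK by blast
    ultimately show ?thesis using continuous_attains_sup[of K D] cont that by blast
  qed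
  have maxall: "D \<mu> \<le> D \<mu>s" if \<mu>: "\<mu> \<in> box_T T" for \<mu>
  proof (cases "\<mu> \<in> K")
    case True then show ?thesis by (rule \<mu>smax)
  next
    case False
    have "\<not> (\<forall>j. \<mu> $ j \<le> \<delta>)" using False \<mu> unfolding K_def box_T_def by (auto simp: mem_box_cart)
    then obtain j where j: "\<mu> $ j > \<delta>" by (auto simp: not_le)
    have p: "0 < 1 - \<mu> $ j / T" using \<mu> assms(2) by (auto simp: box_T_def)
    have "1 - \<mu> $ j / T < e" using j assms(2) unfolding \<delta>_def by (simp add: field_simps)
    also have "\<dots> \<le> exp (L / c j)" by (rule e_le)
    finally have lt: "1 - \<mu> $ j / T < exp (L / c j)" .
    have "ln (1 - \<mu> $ j / T) < ln (exp (L / c j))"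
      using lt p by (subst ln_less_cancel_iff) auto
    hence "ln (1 - \<mu> $ j / T) < L / c j" by simp
    hence cj: "c j * ln (1 - \<mu> $ j / T) < L" using assms(1)[of j] by (simp add: field_simps)
    have "(\<Sum>j\<in>UNIV. c j * ln (1 - \<mu> $ j / T)) = c j * ln (1 - \<mu> $ j / T) + (\<Sum>k\<in>UNIV-{j}. c k * ln (1 - \<mu> $ k / T))"
      by (simp add: sum.remove)
    also have "\<dots> \<le> c j * ln (1 - \<mu> $ j / T)"
      using lnle[OF \<mu>] by (simp add: sum_nonpos)
    finally have "(\<Sum>j\<in>UNIV. c j * ln (1 - \<mu> $ j / T)) < L" using cj by simp
    hence "D \<mu> < M + L" using Sb[OF \<mu>] unfolding D_def dual_D_def by simp
    also have "\<dots> < D 0" unfolding L_def D0_def by simp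
    also have "\<dots> \<le> D \<mu>s" using \<mu>smax[OF zK] .
    finally show ?thesis by simp
  qed
  have uniq: "x = y" if x: "x \<in> box_T T" "\<forall>\<mu>\<in>box_T T. D \<mu> \<le> D x"
    and y: "y \<in> box_T T" "\<forall>\<mu>\<in>box_T T. D \<mu> \<le> D y" for x y
  proof (rule ccontr)
    assume ne: "x \<noteq> y"
    have cv: "convex (box_T T :: (real^'n) set)" by (rule box_T_convex)
    have mid: "(1 - 1/2) *\<^sub>R x + (1/2) *\<^sub>R y \<in> box_T T"
      using convexD[OF cv x(1) y(1), of "1 - 1/2" "1/2"] by simp
    have "(1 - 1/2) * D x + (1/2) * D y < D ((1 - 1/2) *\<^sub>R x + (1/2) *\<^sub>R y)"
    proof -
      have "\<forall>t. 0 < t \<and> t < 1 \<longrightarrow> (1 - t) * D x + t * D y < D ((1 - t) *\<^sub>R x + t *\<^sub>R y)"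
        using sc x(1) y(1) ne unfolding strictly_concave_on_def by blast
      then show ?thesis by (erule_tac x="1/2" in allE) simp
    qed
    moreover have "D x = D y" using x y by (meson order_antisym)
    moreover have "D ((1 - 1/2) *\<^sub>R x + (1/2) *\<^sub>R y) \<le> D x" using x(2) mid by blast
    ultimately show False by simp
  qed
  have "\<exists>!\<mu>s. \<mu>s \<in> box_T T \<and> (\<forall>\<mu>\<in>box_T T. D \<mu> \<le> D \<mu>s)"
  proof (rule ex_ex1I)
    show "\<exists>\<mu>s. \<mu>s \<in> box_T T \<and> (\<forall>\<mu>\<in>box_T T. D \<mu> \<le> D \<mu>s)"
      using \<mu>sK Kbox maxall by blast
  next
    fix x y assume "x \<in> box_T T \<and> (\<forall>\<mu>\<in>box_T T. D \<mu> \<le> D x)"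
      "y \<in> box_T T \<and> (\<forall>\<mu>\<in>box_T T. D \<mu> \<le> D y)"
    then show "x = y" using uniq by blast
  qed
  then show ?thesis using sc unfolding D_def by simp
qed

end
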